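(* Let $M$ be a magma. If $M$ is graded then $M$ is semigraded, and if $M$ is semigraded then $M$ is initial.
   Context: A magma is a set $M$ with a binary operation $+$. $\mathbb{N}$ denotes the set of positive integers. A gradation of $M$ is a map $\ell: M\to\mathbb{N}$ with $\ell(x+y)=\ell(x)+\ell(y)$ for all $x,y$; $M$ is graded if it admits a gradation. $M$ is semigraded if there is a map $\mu: M\to\mathbb{N}$ with $\mu(x+y)>\mu(x)$ and $\mu(x+y)>\mu(y)$ for all $x,y\in M$. The initial part of $M$ is $\mathfrak{I}(M)=\langle M\setminus(M+M)\rangle$, the submagma generated by the indecomposable elements (those not of the form $x+y$), and $M$ is initial if $\mathfrak{I}(M)=M$. *)

theory Defs
  imports Main
begin

definition magma :: "'a set \<Rightarrow> ('a \<Rightarrow> 'a \<Rightarrow> 'a) \<Rightarrow> bool" where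
  "magma M add \<longleftrightarrow> (\<forall>x\<in>M. \<forall>y\<in>M. add x y \<in> M)"

definition graded :: "'a set \<Rightarrow> ('a \<Rightarrow> 'a \<Rightarrow> 'a) \<Rightarrow> bool" where
  "graded M add \<longleftrightarrow> (\<exists>l :: 'a \<Rightarrow> nat. (\<forall>x\<in>M. l x \<ge> 1) \<and>
      (\<forall>x\<in>M. \<forall>y\<in>M. l (add x y) = l x + l y))"

definition semigraded :: "'a set \<Rightarrow> ('a \<Rightarrow> 'a \<Rightarrow> 'a) \<Rightarrow> bool" where
  "semigraded M add \<longleftrightarrow> (\<exists>mu :: 'a \<Rightarrow> nat. (\<forall>x\<in>M. mu x \<ge> 1) \<and>
      (\<forall>x\<in>M. \<forall>y\<in>M. mu (add x y) > mu x \<and> mu (add x y) > mu y))"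

definition indecomposables :: "'a set \<Rightarrow> ('a \<Rightarrow> 'a \<Rightarrow> 'a) \<Rightarrow> 'a set" where
  "indecomposables M add = M - {add x y | x y. x \<in> M \<and> y \<in> M}"

inductive_set generated :: "('a \<Rightarrow> 'a \<Rightarrow> 'a) \<Rightarrow> 'a set \<Rightarrow> 'a set"
  for add :: "'a \<Rightarrow> 'a \<Rightarrow> 'a" and S :: "'a set" where
  base: "s \<in> S \<Longrightarrow> s \<in> generated add S"
| step: "a \<in> generated add S \<Longrightarrow> b \<in> generated add S \<Longrightarrow> add a b \<in> generated add S"

definition initial_part :: "'a set \<Rightarrow> ('a \<Rightarrow> 'a \<Rightarrow> 'a) \<Rightarrow> 'a set" where
  "initial_part M add = generated add (indecomposables M add)"

definition initial :: "'a set \<Rightarrow> ('a \<Rightarrow> 'a \<Rightarrow> 'a) \<Rightarrow> bool" where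
  "initial M add \<longleftrightarrow> initial_part M add = M"

end

theory Submission
  imports Defs
begin

lemma gen_sub:
  assumes "magma M add" "x \<in> generated add (indecomposables M add)"
  shows "x \<in> M"
  using assms(2)
proof (induction rule: generated.induct)
  case (base s) then show ?case by (simp add: indecomposables_def)
next
  case (step a b) then show ?case using assms(1) by (simp add: magma_def)
qed

lemma semi_init:
  assumes "magma M add" "semigraded M add"
  shows "initial M add"
proof -
  obtain mu :: "'a \<Rightarrow> nat" where mu: "\<forall>x\<in>M. \<forall>y\<in>M. mu (add x y) > mu x \<and> mu (add x y) > mu y"
    using assms(2) unfolding semigraded_def by blast
  have "\<forall>x. mu x = n \<longrightarrow> x \<in> M \<longrightarrow> x \<in> generated add (indecomposables M add)" for n
  proof (induction n rule: less_induct)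
    case (less n)
    show ?case
    proof (intro allI impI)
      fix x assume x: "mu x = n" "x \<in> M"
      show "x \<in> generated add (indecomposables M add)"
      proof (cases "x \<in> indecomposables M add")
        case True then show ?thesis by (rule generated.base)
      next
        case False
        then obtain a b where ab: "a \<in> M" "b \<in> M" "x = add a b"
          using x(2) unfolding indecomposables_def by blast
        then have "mu a < n" "mu b < n" using mu x(1) by auto
        then show ?thesis using less ab by (auto intro: generated.step)
      qed
    qed
  qed
  then have "M \<subseteq> initial_part M add" unfolding initial_part_def by blast
  moreover have "initial_part M add \<subseteq> M"
    unfolding initial_part_def using gen_sub[OF assms(1)] by blast
  ultimately show ?thesis unfolding initial_def by blast
qed

theorem proposition4p7:
  fixes M :: "'a set" and add :: "'a \<Rightarrow> 'a \<Rightarrow> 'a"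
  assumes "magma M add"
  shows "(graded M add \<longrightarrow> semigraded M add) \<and> (semigraded M add \<longrightarrow> initial M add)"
proof (intro conjI impI)
  assume "graded M add"
  then obtain l :: "'a \<Rightarrow> nat" where "\<forall>x\<in>M. l x \<ge> 1" "\<forall>x\<in>M. \<forall>y\<in>M. l (add x y) = l x + l y"
    unfolding graded_def by blast
  then show "semigraded M add" unfolding semigraded_def
    by (intro exI[of _ l]) fastforce
next
  assume "semigraded M add"
  then show "initial M add" using semi_init assms by blast
qed

end
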